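(* Let $G$ be a graph with $L(G)=2l(G)$. Then there do not exist two distinct vertices $u,v$ of degree one in $G$ that are adjacent to the same vertex $w$.
   Context: Graphs are finite, undirected, without loops or multiple edges. $\nu(G)$ denotes the maximum size of a matching of $G$; a matching is maximum if it has $\nu(G)$ edges. For $F\subseteq E(G)$, $G\setminus F$ is the graph with vertex set $V(G)$ and edge set $E(G)\setminus F$. Define $L(G)=\max\{\nu(G\setminus F): F \text{ a maximum matching of } G\}$ and $l(G)=\min\{\nu(G\setminus F): F \text{ a maximum matching of } G\}$. *)

theory Defs
  imports Main
begin

definition simple_graph :: "'a set \<Rightarrow> 'a set set \<Rightarrow> bool" where
  "simple_graph V E \<longleftrightarrow> finite V \<and> (\<forall>e\<in>E. e \<subseteq> V \<and> card e = 2)"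

definition matching :: "'a set set \<Rightarrow> 'a set set \<Rightarrow> bool" where
  "matching E M \<longleftrightarrow> M \<subseteq> E \<and> (\<forall>e\<in>M. \<forall>f\<in>M. e \<noteq> f \<longrightarrow> e \<inter> f = {})"

definition nu :: "'a set set \<Rightarrow> nat" where
  "nu E = Max {card M | M. matching E M}"

definition max_matching :: "'a set set \<Rightarrow> 'a set set \<Rightarrow> bool" where
  "max_matching E F \<longleftrightarrow> matching E F \<and> card F = nu E"

text \<open>G minus F has the same vertex set and edge set E - F.\<close>
definition LL :: "'a set set \<Rightarrow> nat" where
  "LL E = Max {nu (E - F) | F. max_matching E F}"

definition ll :: "'a set set \<Rightarrow> nat" where
  "ll E = Min {nu (E - F) | F. max_matching E F}"

definition degree :: "'a set set \<Rightarrow> 'a \<Rightarrow> nat" where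
  "degree E v = card {e \<in> E. v \<in> e}"

end

theory Submission
  imports Defs
begin

lemma fin_E: "simple_graph V E \<Longrightarrow> finite E"
  unfolding simple_graph_def by (meson PowI finite_Pow_iff finite_subset subsetI)

lemma nu_ge: "finite E \<Longrightarrow> matching E M \<Longrightarrow> card M \<le> nu E"
  unfolding nu_def
proof (rule Max_ge)
  assume "finite E" "matching E M"
  have "{card M |M. matching E M} \<subseteq> card ` Pow E" unfolding matching_def by blast
  then show "finite {card M |M. matching E M}" using \<open>finite E\<close> by (meson finite_Pow_iff finite_imageI finite_subset)
  show "card M \<in> {card M |M. matching E M}" using \<open>matching E M\<close> by blast
qed

lemma nu_ex: "finite E \<Longrightarrow> \<exists>M. matching E M \<and> card M = nu E"
proof -
  assume fe: "finite E"
  have "{card M |M. matching E M} \<subseteq> card ` Pow E" unfolding matching_def by blast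
  then have fin: "finite {card M |M. matching E M}" using fe by (meson finite_Pow_iff finite_imageI finite_subset)
  have "matching E {}" unfolding matching_def by simp
  then have ne: "{card M |M. matching E M} \<noteq> {}" by blast
  have "nu E \<in> {card M |M. matching E M}" unfolding nu_def using Max_in[OF fin ne] .
  then show ?thesis by auto
qed

lemma sets_fin:
  assumes "finite E"
  shows "finite {nu (E - F) |F. max_matching E F}" "{nu (E - F) |F. max_matching E F} \<noteq> {}"
proof -
  have "{nu (E - F) |F. max_matching E F} \<subseteq> (\<lambda>F. nu (E - F)) ` Pow E"
    unfolding max_matching_def matching_def by blast
  then show "finite {nu (E - F) |F. max_matching E F}" using assms
    by (meson finite_Pow_iff finite_imageI finite_subset)
  obtain M where "matching E M \<and> card M = nu E" using nu_ex[OF assms] by blast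
  then show "{nu (E - F) |F. max_matching E F} \<noteq> {}" unfolding max_matching_def by blast
qed

lemma ll_ex: "finite E \<Longrightarrow> \<exists>F. max_matching E F \<and> nu (E - F) = ll E"
proof -
  assume fe: "finite E"
  have "ll E \<in> {nu (E - F) |F. max_matching E F}" unfolding ll_def
    using Min_in[OF sets_fin[OF fe]] .
  then show ?thesis by auto
qed

lemma LL_ex: "finite E \<Longrightarrow> \<exists>F. max_matching E F \<and> nu (E - F) = LL E"
proof -
  assume fe: "finite E"
  have "LL E \<in> {nu (E - F) |F. max_matching E F}" unfolding LL_def
    using Max_in[OF sets_fin[OF fe]] .
  then show ?thesis by auto
qed

lemma match_uniq: "matching E M \<Longrightarrow> e \<in> M \<Longrightarrow> f \<in> M \<Longrightarrow> w \<in> e \<Longrightarrow> w \<in> f \<Longrightarrow> e = f"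
  unfolding matching_def by blast

lemma count:
  assumes fe: "finite E" and mF: "max_matching E F" and mF': "max_matching E F'"
    and mM: "matching (E - F') M"
    and aF': "a \<in> F'" and aM: "a \<notin> M" and ad: "a = {p, w}" and bd: "b = {q, w}"
    and bE: "b \<in> E" and ab: "a \<noteq> b"
    and pp: "\<forall>e\<in>E. p \<in> e \<longrightarrow> e = a" and pq: "\<forall>e\<in>E. q \<in> e \<longrightarrow> e = b"
    and fFin: "f \<in> F" and wf: "w \<in> f"
  shows "card M + 1 \<le> 2 * nu (E - F)"
proof -
  have ME: "M \<subseteq> E - F'" using mM unfolding matching_def by blast
  have FE: "F \<subseteq> E" and F'E: "F' \<subseteq> E" using mF mF' unfolding max_matching_def matching_def by auto
  have fM: "finite M" using ME fe finite_subset by blast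
  have finF: "finite F" using FE fe finite_subset by blast
  have finF': "finite F'" using F'E fe finite_subset by blast
  have feF: "finite (E - F)" using fe by simp
  have cM: "card M = card (M - F) + card (M \<inter> F)"
    using fM by (metis Int_Diff_disjoint Int_commute Un_Diff_Int card_Un_disjoint finite_Diff finite_Int)
  have ceq: "card F = card F'" using mF mF' unfolding max_matching_def by simp
  have cFF: "card (F - F') = card (F' - F)"
    using ceq finF finF' by (metis Int_commute card_Diff_subset_Int finite_Int)
  have MFsub: "M \<inter> F \<subseteq> F - F'" using ME by blast
  have m1: "matching (E - F) (M - F)" using mM unfolding matching_def by blast
  have m2: "matching (E - F) (F' - F)" using mF' unfolding max_matching_def matching_def by blast
  have c1: "card (M - F) \<le> nu (E - F)" using nu_ge[OF feF m1] .
  have c2: "card (F' - F) \<le> nu (E - F)" using nu_ge[OF feF m2] .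
  have c3: "card (M \<inter> F) \<le> card (F - F')" using MFsub by (simp add: card_mono finF)
  have mFm: "matching E F" and mF'm: "matching E F'" using mF mF' unfolding max_matching_def by auto
  have wa: "w \<in> a" using ad by simp
  have wb: "w \<in> b" using bd by simp
  show ?thesis
  proof (cases "f = a")
    case True
    have bF: "b \<notin> F" using match_uniq[OF mFm _ fFin _ wf] wb ab True by blast
    have bF': "b \<notin> F'" using match_uniq[OF mF'm _ aF' _ wa] wb ab by blast
    have "matching (E - F) (insert b (F' - F))"
      unfolding matching_def
    proof (intro conjI ballI impI)
      show "insert b (F' - F) \<subseteq> E - F" using bE bF m2 unfolding matching_def by blast
    next
      fix e g assume e: "e \<in> insert b (F' - F)" and g: "g \<in> insert b (F' - F)" and ne: "e \<noteq> g"
      have dis: "\<And>x. x \<in> F' - F \<Longrightarrow> x \<inter> b = {}"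
      proof -
        fix x assume x: "x \<in> F' - F"
        show "x \<inter> b = {}"
        proof (rule ccontr)
          assume "x \<inter> b \<noteq> {}"
          then have "w \<in> x \<or> q \<in> x" using bd by blast
          moreover have "w \<in> x \<Longrightarrow> False" using match_uniq[OF mF'm _ aF' _ wa] x True fFin by blast
          moreover have "q \<in> x \<Longrightarrow> False" using pq x F'E bF' by blast
          ultimately show False by blast
        qed
      qed
      show "e \<inter> g = {}"
        using e g ne dis m2 unfolding matching_def by blast
    qed
    then have "card (insert b (F' - F)) \<le> nu (E - F)" using nu_ge[OF feF] by blast
    then have "card (F' - F) + 1 \<le> nu (E - F)" using bF' finF' by simp
    then show ?thesis using cM c1 c3 cFF by linarith
  next
    case fa: False
    have aF: "a \<notin> F" using match_uniq[OF mFm _ fFin _ wf] wa fa by blast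
    show ?thesis
    proof (cases "f \<in> M")
      case True
      have "matching (E - F) (insert a (M - F))"
        unfolding matching_def
      proof (intro conjI ballI impI)
        show "insert a (M - F) \<subseteq> E - F" using aF aF' F'E m1 unfolding matching_def by blast
      next
        fix e g assume e: "e \<in> insert a (M - F)" and g: "g \<in> insert a (M - F)" and ne: "e \<noteq> g"
        have mMm: "matching E M" using mM unfolding matching_def by blast
        have dis: "\<And>x. x \<in> M - F \<Longrightarrow> x \<inter> a = {}"
        proof -
          fix x assume x: "x \<in> M - F"
          show "x \<inter> a = {}"
          proof (rule ccontr)
            assume "x \<inter> a \<noteq> {}"
            then have "w \<in> x \<or> p \<in> x" using ad by blast
            moreover have "w \<in> x \<Longrightarrow> False" using match_uniq[OF mMm _ True _ wf] x fFin by blast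
            moreover have "p \<in> x \<Longrightarrow> False" using pp x ME aM by blast
            ultimately show False by blast
          qed
        qed
        show "e \<inter> g = {}"
          using e g ne dis m1 unfolding matching_def by blast
      qed
      then have "card (insert a (M - F)) \<le> nu (E - F)" using nu_ge[OF feF] by blast
      then have "card (M - F) + 1 \<le> nu (E - F)" using aM fM by simp
      then show ?thesis using cM c2 c3 cFF by linarith
    next
      case False
      have fF'n: "f \<notin> F'" using match_uniq[OF mF'm _ aF' _ wa] wf fa by blast
      have "M \<inter> F \<subseteq> (F - F') - {f}" using MFsub False by blast
      then have "card (M \<inter> F) \<le> card ((F - F') - {f})" by (simp add: card_mono finF)
      also have "\<dots> = card (F - F') - 1" using finF fF'n \<open>f \<in> F\<close> by simp
      finally have c4: "card (M \<inter> F) \<le> card (F - F') - 1" .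
      have "f \<in> F - F'" using fF'n \<open>f \<in> F\<close> by blast
      then have "card (F - F') > 0" using finF card_gt_0_iff by (metis empty_iff finite_Diff)
      then have "card (M \<inter> F) + 1 \<le> card (F - F')" using c4 by linarith
      then show ?thesis using cM c1 c2 cFF by linarith
    qed
  qed
qed


lemma pend: "degree E u = 1 \<Longrightarrow> {u,w} \<in> E \<Longrightarrow> \<forall>e\<in>E. u \<in> e \<longrightarrow> e = {u,w}"
  unfolding degree_def by (metis (no_types, lifting) card_1_singletonE mem_Collect_eq singletonD insertI1)

lemma cover:
  assumes fe: "finite E" and mF: "max_matching E F" and pE: "{p,w} \<in> E"
    and pp: "\<forall>e\<in>E. p \<in> e \<longrightarrow> e = {p,w}"
  shows "\<exists>f\<in>F. w \<in> f"
proof (rule ccontr)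
  assume nf: "\<not> (\<exists>f\<in>F. w \<in> f)"
  have FE: "F \<subseteq> E" using mF unfolding max_matching_def matching_def by auto
  have aF: "{p,w} \<notin> F" using nf by blast
  have "matching E (insert {p,w} F)"
    unfolding matching_def
  proof (intro conjI ballI impI)
    show "insert {p, w} F \<subseteq> E" using FE pE by blast
  next
    fix e g assume e: "e \<in> insert {p,w} F" and g: "g \<in> insert {p,w} F" and ne: "e \<noteq> g"
    have dis: "\<And>x. x \<in> F \<Longrightarrow> x \<inter> {p,w} = {}"
      using nf pp FE aF by blast
    show "e \<inter> g = {}" using e g ne dis mF unfolding max_matching_def matching_def by blast
  qed
  then have "card (insert {p,w} F) \<le> nu E" using nu_ge[OF fe] by blast
  moreover have "finite F" using FE fe finite_subset by blast
  ultimately have "card F + 1 \<le> nu E" using aF by simp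
  then show False using mF unfolding max_matching_def by simp
qed

lemma swap:
  assumes fe: "finite E" and mF': "max_matching E F'" and mM: "matching (E - F') M"
    and pE: "{p,w} \<in> E" and pp: "\<forall>e\<in>E. p \<in> e \<longrightarrow> e = {p,w}" and aM: "{p,w} \<notin> M"
  shows "\<exists>F''. max_matching E F'' \<and> {p,w} \<in> F'' \<and> matching (E - F'') M"
proof -
  obtain g where gF: "g \<in> F'" and wg: "w \<in> g" using cover[OF fe mF' pE pp] by blast
  have F'E: "F' \<subseteq> E" using mF' unfolding max_matching_def matching_def by auto
  have mF'm: "matching E F'" using mF' unfolding max_matching_def by auto
  have finF': "finite F'" using F'E fe finite_subset by blast
  have dis: "\<And>x. x \<in> F' - {g} \<Longrightarrow> x \<inter> {p,w} = {}"
  proof -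
    fix x assume x: "x \<in> F' - {g}"
    show "x \<inter> {p,w} = {}"
    proof (rule ccontr)
      assume "x \<inter> {p,w} \<noteq> {}"
      then have "w \<in> x \<or> p \<in> x" by blast
      moreover have "w \<in> x \<Longrightarrow> False" using match_uniq[OF mF'm _ gF _ wg] x by blast
      moreover have "p \<in> x \<Longrightarrow> False"
      proof -
        assume "p \<in> x"
        then have "x = {p,w}" using pp x F'E by blast
        then show False using match_uniq[OF mF'm _ gF _ wg] x by blast
      qed
      ultimately show False by blast
    qed
  qed
  have aF: "{p,w} \<notin> F' - {g}" using dis by blast
  define F'' where "F'' = insert {p,w} (F' - {g})"
  have m: "matching E F''"
    unfolding matching_def F''_def
  proof (intro conjI ballI impI)
    show "insert {p, w} (F' - {g}) \<subseteq> E" using F'E pE by blast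
  next
    fix e h assume e: "e \<in> insert {p,w} (F' - {g})" and h: "h \<in> insert {p,w} (F' - {g})" and ne: "e \<noteq> h"
    show "e \<inter> h = {}" using e h ne dis mF'm unfolding matching_def by blast
  qed
  have "card F'' = card (F' - {g}) + 1" unfolding F''_def using aF finF' by simp
  also have "\<dots> = card F'" using gF finF'
    by (metis Suc_eq_plus1 card_Suc_Diff1)
  finally have "max_matching E F''" using m mF' unfolding max_matching_def by simp
  moreover have "matching (E - F'') M" using mM aM unfolding matching_def F''_def by blast
  ultimately show ?thesis unfolding F''_def by blast
qed

lemma key:
  assumes fe: "finite E"
    and pE: "{p,w} \<in> E" and pp: "\<forall>e\<in>E. p \<in> e \<longrightarrow> e = {p,w}"
    and qE: "{q,w} \<in> E" and qq: "\<forall>e\<in>E. q \<in> e \<longrightarrow> e = {q,w}"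
    and pq: "p \<noteq> q" and pw: "p \<noteq> w"
    and mF': "max_matching E F'" and mM: "matching (E - F') M" and cM: "card M = LL E"
    and aM: "{p,w} \<notin> M" and LL: "LL E = 2 * ll E"
  shows False
proof -
  obtain F'' where mF'': "max_matching E F''" and aF'': "{p,w} \<in> F''" and mM'': "matching (E - F'') M"
    using swap[OF fe mF' mM pE pp aM] by blast
  obtain F where mF: "max_matching E F" and lF: "nu (E - F) = ll E" using ll_ex[OF fe] by blast
  obtain f where fF: "f \<in> F" and wf: "w \<in> f" using cover[OF fe mF pE pp] by blast
  have ab: "{p,w} \<noteq> {q,w}" using pq pw by (metis doubleton_eq_iff)
  have "card M + 1 \<le> 2 * nu (E - F)"
    using count[OF fe mF mF'' mM'' aF'' aM refl refl qE ab pp qq fF wf] .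
  then show False using lF cM LL by simp
qed

theorem corollary1:
  fixes V :: "'a set" and E :: "'a set set"
  assumes "simple_graph V E"
    and "LL E = 2 * ll E"
  shows "\<not> (\<exists>u v w. u \<in> V \<and> v \<in> V \<and> w \<in> V \<and> u \<noteq> v \<and>
             degree E u = 1 \<and> degree E v = 1 \<and> {u, w} \<in> E \<and> {v, w} \<in> E)"
proof
  assume "\<exists>u v w. u \<in> V \<and> v \<in> V \<and> w \<in> V \<and> u \<noteq> v \<and>
             degree E u = 1 \<and> degree E v = 1 \<and> {u, w} \<in> E \<and> {v, w} \<in> E"
  then obtain u v w where uv: "u \<noteq> v" and du: "degree E u = 1" and dv: "degree E v = 1"
    and uE: "{u, w} \<in> E" and vE: "{v, w} \<in> E" by blast
  have fe: "finite E" using fin_E[OF assms(1)] .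
  have uw: "u \<noteq> w" using uE assms(1) unfolding simple_graph_def by fastforce
  have vw: "v \<noteq> w" using vE assms(1) unfolding simple_graph_def by fastforce
  have pu: "\<forall>e\<in>E. u \<in> e \<longrightarrow> e = {u,w}" using pend[OF du uE] .
  have pv: "\<forall>e\<in>E. v \<in> e \<longrightarrow> e = {v,w}" using pend[OF dv vE] .
  obtain F' where mF': "max_matching E F'" and lF': "nu (E - F') = LL E" using LL_ex[OF fe] by blast
  obtain M where mM: "matching (E - F') M" and cM: "card M = nu (E - F')"
    using nu_ex[of "E - F'"] fe by auto
  show False
  proof (cases "{u,w} \<in> M")
    case False
    show False using key[OF fe uE pu vE pv uv uw mF' mM _ False assms(2)] cM lF' by simp
  next
    case True
    have mMm: "matching E M" using mM unfolding matching_def by blast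
    have "{v,w} \<notin> M"
    proof
      assume "{v,w} \<in> M"
      then have "{v,w} = {u,w}" using match_uniq[OF mMm _ True] by blast
      then show False using uv vw by (metis doubleton_eq_iff)
    qed
    then show False using key[OF fe vE pv uE pu uv[symmetric] vw mF' mM _ _ assms(2)] cM lF' by simp
  qed
qed

end
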